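(* Let $\rho,\lambda,\mu$ be partitions of $n$, write $|\rho|$ for the number of parts of $\rho$, and let $|\lambda|=I$, $|\mu|=J$. Let $m_\rho=m_\rho^\lambda m_\rho^\mu$. Then: (a) $m_{(n-1,1)}=(I-1)(J-1)$; this is the multiplicity attached to $\beta_{(n-1,1)}=1-2/n$. (b) If $m_\rho>0$, then $|\rho|\le\min(I,J)$ and $\rho_1\ge\max(\lambda_1,\mu_1)$. (c) If $\rho=(n-k,k)$ with $1\le k\le\lfloor n/2\rfloor$ and $\lambda=(n-j,j)$, then $m_\rho^\lambda=0$ if $k>j$ and $m_\rho^\lambda=1$ otherwise. (d) If $\rho=(n-k,k)$, $\mu=(\mu_1,\dots,\mu_J)$ and $\mu_1\ge k$, then \[ m_\rho^\mu=\#\Big\{(x_1,\dots,x_{J-1})\in\mathbb{N}^{J-1}:\ \sum_{j=1}^{J-1}x_j=k,\ x_j\le\mu_{j+1}\Big\}=\big|\mathcal{T}_{(k,\,n-\mu_1-k),(\mu_2,\mu_3,\dots,\mu_J)}\big|. \]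
   Context: For partitions $\rho,\lambda$ of $n$, the Kostka number $m_\rho^\lambda$ is the number of semistandard Young tableaux of shape $\rho$ and content $\lambda$: fillings of the Young diagram of $\rho$ with $\lambda_1$ symbols $1$, $\lambda_2$ symbols $2$, etc., with rows weakly increasing and columns strictly increasing. $\beta_\rho=\frac1n+\frac1{n^2}\sum_{j}\left[\rho_j^2-(2j-1)\rho_j\right]$. For sequences $a=(a_1,\dots,a_p)$, $b=(b_1,\dots,b_q)$ of nonnegative integers with equal sums, $\mathcal{T}_{a,b}$ denotes the set of $p\times q$ nonnegative integer tables with row sums $a$ and column sums $b$. Here $\mathbb{N}=\{0,1,2,\dots\}$. *)

theory Defs
  imports Complex_Main
begin

text \<open>A partition of n: a weakly decreasing list of positive naturals summing to n.
  Part rho_j (1-indexed in the paper) is rho ! (j-1).\<close>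
definition is_partition :: "nat \<Rightarrow> nat list \<Rightarrow> bool" where
  "is_partition n \<rho> \<longleftrightarrow> sorted_wrt (\<ge>) \<rho> \<and> (\<forall>x\<in>set \<rho>. 0 < x) \<and> sum_list \<rho> = n"

definition strip_zeros :: "nat list \<Rightarrow> nat list" where
  "strip_zeros xs = filter (\<lambda>x. 0 < x) xs"

definition cells :: "nat list \<Rightarrow> (nat \<times> nat) set" where
  "cells \<rho> = {(i, j). i < length \<rho> \<and> j < \<rho> ! i}"

definition ssyt :: "nat list \<Rightarrow> nat list \<Rightarrow> (nat \<Rightarrow> nat \<Rightarrow> nat) set" where
  "ssyt \<rho> la = {T. (\<forall>i j. (i, j) \<notin> cells \<rho> \<longrightarrow> T i j = 0)
      \<and> (\<forall>(i, j)\<in>cells \<rho>. 1 \<le> T i j \<and> T i j \<le> length la)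
      \<and> (\<forall>i j. (i, Suc j) \<in> cells \<rho> \<longrightarrow> T i j \<le> T i (Suc j))
      \<and> (\<forall>i j. (Suc i, j) \<in> cells \<rho> \<longrightarrow> T i j < T (Suc i) j)
      \<and> (\<forall>c\<in>{1..length la}. card {(i, j)\<in>cells \<rho>. T i j = c} = la ! (c - 1))}"

definition kostka :: "nat list \<Rightarrow> nat list \<Rightarrow> nat" where
  "kostka \<rho> la = card (ssyt \<rho> la)"

definition beta :: "nat \<Rightarrow> nat list \<Rightarrow> real" where
  "beta n \<rho> = 1 / real n + 1 / (real n)^2 *
     (\<Sum>j<length \<rho>. (real (\<rho> ! j))^2 - (2 * real (j + 1) - 1) * real (\<rho> ! j))"

definition tables :: "nat list \<Rightarrow> nat list \<Rightarrow> (nat \<Rightarrow> nat \<Rightarrow> nat) set" where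
  "tables a b = {M. (\<forall>i j. (length a \<le> i \<or> length b \<le> j) \<longrightarrow> M i j = 0)
      \<and> (\<forall>i<length a. (\<Sum>j<length b. M i j) = a ! i)
      \<and> (\<forall>j<length b. (\<Sum>i<length a. M i j) = b ! j)}"

end

theory Submission
  imports Defs "HOL-Library.Multiset"
begin

lemma count_row: "count (mset (map f [0..<r])) c = card {j. j < r \<and> f j = c}"
proof -
  have "count (mset (map f [0..<r])) c = length (filter ((=) c) (map f [0..<r]))"
    by (simp only: count_mset count_list_eq_length_filter)  
  also have "\<dots> = card {j. j < r \<and> f j = c}"
    unfolding length_filter_conv_card by (auto intro!: arg_cong[where f=card])
  finally show ?thesis .
qed

lemma cells2: "(i, j) \<in> cells [a, b] \<longleftrightarrow> (i = 0 \<and> j < a) \<or> (i = 1 \<and> j < b)"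
  by (auto simp: cells_def less_Suc_eq nth_Cons split: nat.splits)

lemma content2: "card {(i, j)\<in>cells [a, b]. T i j = c}
   = count (mset (map (T 0) [0..<a])) c + count (mset (map (T 1) [0..<b])) c"
proof -
  have "{(i, j)\<in>cells [a, b]. T i j = c} = Pair (0::nat) ` {j. j<a \<and> T 0 j = c} \<union> Pair 1 ` {j. j<b \<and> T 1 j = c}"
    by (auto simp: cells2)
  moreover have "card (Pair (0::nat) ` {j. j<a \<and> T 0 j = c} \<union> Pair 1 ` {j. j<b \<and> T 1 j = c})
     = card {j. j<a \<and> T 0 j = c} + card {j. j<b \<and> T 1 j = c}"
    by (subst card_Un_disjoint) (auto simp: card_image inj_on_def)
  ultimately show ?thesis unfolding count_row by simp
qed

lemma ssyt2_iff: "T \<in> ssyt [a, b] mu \<longleftrightarrow>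
   (\<forall>i j. \<not> ((i = 0 \<and> j < a) \<or> (i = 1 \<and> j < b)) \<longrightarrow> T i j = 0)
 \<and> (\<forall>j<a. 1 \<le> T 0 j \<and> T 0 j \<le> length mu)
 \<and> (\<forall>j<b. 1 \<le> T 1 j \<and> T 1 j \<le> length mu)
 \<and> (\<forall>j. Suc j < a \<longrightarrow> T 0 j \<le> T 0 (Suc j))
 \<and> (\<forall>j. Suc j < b \<longrightarrow> T 1 j \<le> T 1 (Suc j))
 \<and> (\<forall>j<b. T 0 j < T 1 j)
 \<and> (\<forall>c\<in>{1..length mu}. count (mset (map (T 0) [0..<a])) c + count (mset (map (T 1) [0..<b])) c = mu ! (c - 1))"
  unfolding ssyt_def content2[symmetric]
  by (auto simp: cells2)


lemma count_zero_row: "(\<And>j. j < r \<Longrightarrow> f j \<noteq> c) \<Longrightarrow> count (mset (map f [0..<r])) c = 0"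
  unfolding count_row by auto

lemma sorted_row: "(\<And>j. Suc j < r \<Longrightarrow> f j \<le> f (Suc j)) \<Longrightarrow> sorted (map f [0..<r])"
  unfolding sorted_iff_nth_Suc by auto

lemma sorted_eq_mset: "sorted xs \<Longrightarrow> sorted ys \<Longrightarrow> mset xs = mset ys \<Longrightarrow> xs = ys"
  by (metis properties_for_sort sorted_sort_id)

lemma map_upt_eqD: "map f [0..<r] = map g [0..<r] \<Longrightarrow> j < r \<Longrightarrow> f j = g j"
  by (metis add_0 diff_zero length_map length_upt nth_map nth_upt)

lemma sorted_prefix_ones:
  assumes "sorted L" "\<forall>y\<in>set L. 1 \<le> y" "j < count (mset L) (1::nat)"
  shows "L ! j = 1"
proof (rule ccontr)
  assume ne: "L ! j \<noteq> 1"
  have cnt: "count (mset L) 1 = card {i. i < length L \<and> 1 = L ! i}"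
    by (simp only: count_mset count_list_eq_length_filter length_filter_conv_card)
  have "count (mset L) 1 \<le> length L" by (simp add: count_mset count_le_length)
  hence jl: "j < length L" using assms(3) by simp
  hence "L ! j > 1" using ne assms(2) nth_mem by fastforce
  have "{i. i < length L \<and> 1 = L ! i} \<subseteq> {..<j}"
  proof
    fix i assume "i \<in> {i. i < length L \<and> 1 = L ! i}"
    hence i: "i < length L" "L ! i = 1" by auto
    show "i \<in> {..<j}"
    proof (rule ccontr)
      assume "i \<notin> {..<j}"
      hence "j \<le> i" by simp
      hence "L ! j \<le> L ! i" using sorted_nth_mono[OF assms(1) _ i(1)] by simp
      thus False using i \<open>L ! j > 1\<close> by simp
    qed
  qed
  hence "card {i. i < length L \<and> 1 = L ! i} \<le> j"
    by (metis card_lessThan card_mono finite_lessThan)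
  thus False using cnt assms(3) by simp
qed


definition Xset :: "nat list \<Rightarrow> nat \<Rightarrow> nat list set" where
  "Xset mu k = {xs. length xs = length mu - 1 \<and> sum_list xs = k \<and> (\<forall>j<length mu - 1. xs!j \<le> mu!(j+1))}"

definition Phi :: "nat \<Rightarrow> nat \<Rightarrow> (nat \<Rightarrow> nat \<Rightarrow> nat) \<Rightarrow> nat list" where
  "Phi b J T = map (\<lambda>j. count (mset (map (T 1) [0..<b])) (j+2)) [0..<J-1]"

lemma sum_shift1: "(\<Sum>v\<in>{1..(J::nat)}. g (v - 1)) = (\<Sum>i<J. (g i :: nat))"
  by (induction J) auto

lemma sum_shift2: "(\<Sum>v\<in>{1..(J::nat)}. if 2 \<le> v then g (v - 2) else 0) = (\<Sum>i<J-1. (g i :: nat))"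
proof (induction J)
  case 0 then show ?case by simp
next
  case (Suc J) then show ?case
    by (cases J) auto
qed

lemma row1_ge2:
  assumes "T \<in> ssyt [a, b] mu" "j < b" "b \<le> a"
  shows "2 \<le> T 1 j \<and> T 1 j \<le> length mu"
proof -
  have "j < a" using assms by simp
  hence "1 \<le> T 0 j" "T 0 j < T 1 j" "T 1 j \<le> length mu"
    using assms unfolding ssyt2_iff by auto
  thus ?thesis by linarith
qed

lemma Phi_in:
  assumes T: "T \<in> ssyt [a, b] mu" and ba: "b \<le> a"
  shows "Phi b (length mu) T \<in> Xset mu b"
proof -
  let ?J = "length mu"
  let ?R1 = "mset (map (T 1) [0..<b])"
  have vals: "set_mset ?R1 \<subseteq> {2..?J}" using row1_ge2[OF T _ ba] by auto
  have "sum_list (Phi b ?J T) = (\<Sum>j<?J-1. count ?R1 (j+2))"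
    unfolding Phi_def by (simp add: sum_list_sum_nth atLeast0LessThan)
  also have "\<dots> = (\<Sum>v\<in>{1..?J}. if 2 \<le> v then count ?R1 (v - 2 + 2) else 0)"
    by (rule sum_shift2[symmetric])
  also have "\<dots> = (\<Sum>v\<in>{1..?J}. count ?R1 v)"
  proof (rule sum.cong)
    have "1 \<notin># ?R1" using vals by auto
    hence c1: "count ?R1 1 = 0" by (simp only: not_in_iff)
    fix v assume "v \<in> {1..?J}"
    thus "(if 2 \<le> v then count ?R1 (v - 2 + 2) else 0) = count ?R1 v"
    proof (cases "2 \<le> v")
      case True hence "v - 2 + 2 = v" by simp
      thus ?thesis using True by (simp only: if_True)
    next
      case False
      hence "v = 1" using \<open>v \<in> {1..?J}\<close> by auto
      thus ?thesis using c1 by simp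
    qed
  qed simp
  also have "\<dots> = size ?R1"
  proof -
    have "size ?R1 = size (\<Sum>v\<in>{1..?J}. replicate_mset (count ?R1 v) v)"
    proof -
      have "?R1 = (\<Sum>v\<in>{1..?J}. replicate_mset (count ?R1 v) v)"
      proof (rule multiset_eqI)
        fix x
        show "count ?R1 x = count (\<Sum>v\<in>{1..?J}. replicate_mset (count ?R1 v) v) x"
          using vals by (auto simp: count_sum count_eq_zero_iff)
      qed
      thus ?thesis by simp
    qed
    thus ?thesis by simp
  qed
  also have "\<dots> = b" by simp
  finally have s: "sum_list (Phi b ?J T) = b" .
  have le: "Phi b ?J T ! j \<le> mu ! (j+1)" if "j < ?J - 1" for j
  proof -
    have "Phi b ?J T ! j = count ?R1 (j+2)" using that unfolding Phi_def by simp
    also have "\<dots> \<le> count (mset (map (T 0) [0..<a])) (j+2) + count ?R1 (j+2)" by simp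
    also have "\<dots> = mu ! (j + 1)" using T that unfolding ssyt2_iff by auto
    finally show ?thesis .
  qed
  show ?thesis unfolding Xset_def using s le by (simp add: Phi_def)
qed


lemma Phi_nth: "v \<ge> 2 \<Longrightarrow> v \<le> J \<Longrightarrow> Phi b J T ! (v - 2) = count (mset (map (T 1) [0..<b])) v"
proof -
  assume "v \<ge> 2" "v \<le> J"
  hence "v - 2 < J - 1" "v - 2 + 2 = v" by auto
  thus ?thesis unfolding Phi_def by (simp only: nth_map length_upt nth_upt add_0 diff_zero)
qed

lemma Phi_inj:
  assumes T: "T \<in> ssyt [a, b] mu" and T': "T' \<in> ssyt [a, b] mu"
    and eq: "Phi b (length mu) T = Phi b (length mu) T'" and ba: "b \<le> a"
  shows "T = T'"
proof -
  let ?J = "length mu"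
  have r1: "count (mset (map (T 1) [0..<b])) v = count (mset (map (T' 1) [0..<b])) v" for v
  proof (cases "2 \<le> v \<and> v \<le> ?J")
    case True thus ?thesis using Phi_nth[of v ?J b T] Phi_nth[of v ?J b T'] eq by simp
  next
    case False
    have "count (mset (map (T 1) [0..<b])) v = 0"
      by (rule count_zero_row) (use False row1_ge2[OF T _ ba] in auto)
    moreover have "count (mset (map (T' 1) [0..<b])) v = 0"
      by (rule count_zero_row) (use False row1_ge2[OF T' _ ba] in auto)
    ultimately show ?thesis by simp
  qed
  have srt: "sorted (map (S 1) [0..<b])" "sorted (map (S 0) [0..<a])" if "S \<in> ssyt [a, b] mu" for S
    using that unfolding ssyt2_iff by (auto intro!: sorted_row)
  have m1: "map (T 1) [0..<b] = map (T' 1) [0..<b]"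
    by (rule sorted_eq_mset[OF srt(1)[OF T] srt(1)[OF T']]) (rule multiset_eqI, rule r1)
  have r0: "count (mset (map (T 0) [0..<a])) v = count (mset (map (T' 0) [0..<a])) v" for v
  proof (cases "1 \<le> v \<and> v \<le> ?J")
    case True
    hence "count (mset (map (T 0) [0..<a])) v + count (mset (map (T 1) [0..<b])) v = mu ! (v - 1)"
      "count (mset (map (T' 0) [0..<a])) v + count (mset (map (T' 1) [0..<b])) v = mu ! (v - 1)"
      using T T' unfolding ssyt2_iff by auto
    thus ?thesis using r1[of v] by simp
  next
    case False
    have "count (mset (map (T 0) [0..<a])) v = 0"
      by (rule count_zero_row) (use False T in \<open>auto simp: ssyt2_iff\<close>)
    moreover have "count (mset (map (T' 0) [0..<a])) v = 0"
      by (rule count_zero_row) (use False T' in \<open>auto simp: ssyt2_iff\<close>)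
    ultimately show ?thesis by simp
  qed
  have m0: "map (T 0) [0..<a] = map (T' 0) [0..<a]"
    by (rule sorted_eq_mset[OF srt(2)[OF T] srt(2)[OF T']]) (rule multiset_eqI, rule r0)
  show ?thesis
  proof (rule ext, rule ext)
    fix i j
    show "T i j = T' i j"
    proof (cases "(i = 0 \<and> j < a) \<or> (i = 1 \<and> j < b)")
      case True thus ?thesis using map_upt_eqD[OF m0] map_upt_eqD[OF m1] by auto
    next
      case False thus ?thesis using T[unfolded ssyt2_iff, THEN conjunct1] T'[unfolded ssyt2_iff, THEN conjunct1] by simp
    qed
  qed
qed


lemma partition_facts:
  assumes "is_partition n mu" "0 < n"
  shows "mu \<noteq> []" "\<And>i. i < length mu \<Longrightarrow> 0 < mu ! i" "sum_list mu = n"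
  using assms unfolding is_partition_def by (auto simp: nth_mem)

lemma Phi_surj:
  assumes P: "is_partition n mu" and n: "0 < n" and X: "xs \<in> Xset mu b"
    and a: "a = n - b" and b: "b \<le> mu ! 0"
  shows "\<exists>T\<in>ssyt [a, b] mu. Phi b (length mu) T = xs"
proof -
  let ?J = "length mu"
  have J1: "1 \<le> ?J" using partition_facts[OF P n] by (cases mu) auto
  have lx: "length xs = ?J - 1" and sx: "sum_list xs = b" and lex: "\<And>j. j < ?J - 1 \<Longrightarrow> xs!j \<le> mu!(j+1)"
    using X unfolding Xset_def by auto
  define x where "x v = (if 2 \<le> v then xs ! (v - 2) else 0)" for v
  define M1 where "M1 = (\<Sum>v\<in>{1..?J}. replicate_mset (x v) v)"
  define M0 where "M0 = (\<Sum>v\<in>{1..?J}. replicate_mset (mu ! (v - 1) - x v) v)"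
  define L0 where "L0 = sorted_list_of_multiset M0"
  define L1 where "L1 = sorted_list_of_multiset M1"
  define T where "T i j = (if i = 0 \<and> j < a then L0 ! j else if i = 1 \<and> j < b then L1 ! j else 0)" for i :: nat and j :: nat
  have xle: "x v \<le> mu ! (v - 1)" if "v \<in> {1..?J}" for v
  proof (cases "2 \<le> v")
    case True
    hence "v - 2 < ?J - 1" "v - 2 + 1 = v - 1" using that by auto
    thus ?thesis using lex[of "v - 2"] True unfolding x_def by simp
  qed (simp add: x_def)
  have cM1: "count M1 v = (if v \<in> {1..?J} then x v else 0)" for v
    unfolding M1_def by (simp add: count_sum)
  have cM0: "count M0 v = (if v \<in> {1..?J} then mu ! (v - 1) - x v else 0)" for v
    unfolding M0_def by (simp add: count_sum)
  have sM1: "size M1 = b"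
  proof -
    have "size M1 = (\<Sum>v\<in>{1..?J}. x v)" unfolding M1_def by simp
    also have "\<dots> = (\<Sum>i<?J-1. xs ! i)" unfolding x_def by (rule sum_shift2)
    also have "\<dots> = b" using sx lx by (simp add: sum_list_sum_nth atLeast0LessThan)
    finally show ?thesis .
  qed
  have sM0: "size M0 = a"
  proof -
    have "size M0 = (\<Sum>v\<in>{1..?J}. mu ! (v - 1) - x v)" unfolding M0_def by simp
    also have "\<dots> = (\<Sum>v\<in>{1..?J}. mu ! (v - 1)) - (\<Sum>v\<in>{1..?J}. x v)"
      by (rule sum_subtractf_nat) (use xle in auto)
    also have "(\<Sum>v\<in>{1..?J}. mu ! (v - 1)) = n"
      using sum_shift1[of "\<lambda>i. mu ! i" ?J] partition_facts(3)[OF P n]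
      by (simp add: sum_list_sum_nth atLeast0LessThan)
    also have "(\<Sum>v\<in>{1..?J}. x v) = b"
      using sM1 unfolding M1_def by simp
    finally show ?thesis using a by simp
  qed
  have lL0: "length L0 = a" using sM0 unfolding L0_def by (metis mset_sorted_list_of_multiset size_mset)
  have lL1: "length L1 = b" using sM1 unfolding L1_def by (metis mset_sorted_list_of_multiset size_mset)
  have mL0: "mset L0 = M0" and mL1: "mset L1 = M1" unfolding L0_def L1_def by simp_all
  have sL0: "sorted L0" and sL1: "sorted L1" unfolding L0_def L1_def by simp_all
  have setL1: "y \<in> set L1 \<Longrightarrow> 2 \<le> y \<and> y \<le> ?J" for y
  proof -
    assume "y \<in> set L1"
    hence "count M1 y > 0" unfolding L1_def by simp
    thus ?thesis using cM1[of y] unfolding x_def by (auto split: if_splits)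
  qed
  have setL0: "y \<in> set L0 \<Longrightarrow> 1 \<le> y \<and> y \<le> ?J" for y
  proof -
    assume "y \<in> set L0"
    hence "count M0 y > 0" unfolding L0_def by simp
    thus ?thesis using cM0[of y] by (auto split: if_splits)
  qed
  have row0: "map (T 0) [0..<a] = L0"
    by (rule nth_equalityI) (auto simp: lL0 T_def)
  have row1: "map (T 1) [0..<b] = L1"
    by (rule nth_equalityI) (auto simp: lL1 T_def)
  have c1: "count (mset L0) 1 = mu ! 0" using mL0 cM0[of 1] J1 by (simp add: x_def)
  have TinS: "T \<in> ssyt [a, b] mu"
    unfolding ssyt2_iff row0 row1
  proof (intro conjI allI impI ballI)
    fix i j :: nat assume "\<not> (i = 0 \<and> j < a \<or> i = 1 \<and> j < b)"
    thus "T i j = 0" unfolding T_def by auto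
  next
    fix j assume "j < a"
    thus "1 \<le> T 0 j" "T 0 j \<le> ?J" using setL0[of "L0 ! j"] lL0 by (auto simp: T_def)
  next
    fix j assume "j < b"
    thus "1 \<le> T 1 j" "T 1 j \<le> ?J" using setL1[of "L1 ! j"] lL1 by (auto simp: T_def)
  next
    fix j assume "Suc j < a"
    thus "T 0 j \<le> T 0 (Suc j)" using sorted_nth_mono[OF sL0, of j "Suc j"] lL0 by (auto simp: T_def)
  next
    fix j assume "Suc j < b"
    thus "T 1 j \<le> T 1 (Suc j)" using sorted_nth_mono[OF sL1, of j "Suc j"] lL1 by (auto simp: T_def)
  next
    fix j assume j: "j < b"
    have "L0 ! j = 1"
      by (rule sorted_prefix_ones[OF sL0]) (use setL0 c1 j b in auto)
    moreover have "j < a"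
    proof -
      have "count M0 1 \<le> size M0" by (rule count_le_size)
      thus ?thesis using j b c1 mL0 sM0 by simp
    qed
    moreover have "2 \<le> L1 ! j" using setL1[of "L1 ! j"] j lL1 by auto
    ultimately show "T 0 j < T 1 j" using j by (auto simp: T_def)
  next
    fix c assume "c \<in> {1..?J}"
    thus "count (mset L0) c + count (mset L1) c = mu ! (c - 1)"
      using mL0 mL1 cM0[of c] cM1[of c] xle[of c] by simp
  qed
  have "Phi b ?J T = xs"
  proof (rule nth_equalityI)
    show "length (Phi b ?J T) = length xs" using lx by (simp add: Phi_def)
    fix j assume "j < length (Phi b ?J T)"
    hence j: "j < ?J - 1" by (simp add: Phi_def)
    have "Phi b ?J T ! j = count M1 (j + 2)" using j unfolding Phi_def row1 mL1 by simp
    also have "\<dots> = xs ! j"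
    proof -
      have "j + 2 \<in> {1..?J}" using j by auto
      thus ?thesis using cM1[of "j+2"] by (simp add: x_def)
    qed
    finally show "Phi b ?J T ! j = xs ! j" .
  qed
  thus ?thesis using TinS by blast
qed


lemma cells_strip: "b \<le> a \<Longrightarrow> cells (strip_zeros [a, b]) = cells [a, b]"
  by (auto simp: strip_zeros_def cells_def less_Suc_eq nth_Cons split: nat.splits)

lemma ssyt_cells: "cells r = cells r' \<Longrightarrow> ssyt r la = ssyt r' la"
  unfolding ssyt_def by simp

lemma kostka_two:
  assumes P: "is_partition n mu" and n: "0 < n" and k: "k \<le> n - k" "k \<le> mu ! 0"
  shows "kostka (strip_zeros [n - k, k]) mu = card (Xset mu k)"
proof -
  have "ssyt (strip_zeros [n - k, k]) mu = ssyt [n - k, k] mu"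
    by (rule ssyt_cells, rule cells_strip) (use k in simp)
  moreover have "bij_betw (Phi k (length mu)) (ssyt [n - k, k] mu) (Xset mu k)"
    unfolding bij_betw_def
  proof
    show "inj_on (Phi k (length mu)) (ssyt [n - k, k] mu)"
      by (rule inj_onI) (rule Phi_inj, use k in auto)
    show "Phi k (length mu) ` ssyt [n - k, k] mu = Xset mu k"
    proof
      show "Phi k (length mu) ` ssyt [n - k, k] mu \<subseteq> Xset mu k" using Phi_in k by blast
      show "Xset mu k \<subseteq> Phi k (length mu) ` ssyt [n - k, k] mu"
      proof
        fix xs assume "xs \<in> Xset mu k"
        then obtain T where "T \<in> ssyt [n - k, k] mu" "Phi k (length mu) T = xs"
          using Phi_surj[OF P n _ refl k(2)] by blast
        thus "xs \<in> Phi k (length mu) ` ssyt [n - k, k] mu" by blast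
      qed
    qed
  qed
  ultimately show ?thesis unfolding kostka_def by (simp add: bij_betw_same_card)
qed

lemma sum_tl: "(mu::nat list) \<noteq> [] \<Longrightarrow> (\<Sum>j<length mu - 1. mu ! (j + 1)) = sum_list mu - mu ! 0"
proof -
  assume ne: "mu \<noteq> []"
  then obtain h t where mu: "mu = h # t" by (cases mu) auto
  have "(\<Sum>j<length mu - 1. mu ! (j + 1)) = (\<Sum>j<length t. t ! j)" unfolding mu by simp
  also have "\<dots> = sum_list t" by (simp only: sum_list_sum_nth atLeast0LessThan)
  finally show ?thesis unfolding mu by simp
qed

lemma Xset_tables:
  assumes P: "is_partition n mu" and n: "0 < n"
  shows "card (Xset mu k) = card (tables [k, n - mu ! 0 - k] (tl mu))"
proof -
  let ?J = "length mu"
  have ne: "mu \<noteq> []" and sm: "sum_list mu = n" using partition_facts[OF P n] by auto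
  have stl: "(\<Sum>j<?J - 1. mu ! (j + 1)) = n - mu ! 0" using sum_tl[OF ne] sm by simp
  define F where "F xs i j = (if i = 0 \<and> j < ?J - 1 then xs ! j
     else if i = 1 \<and> j < ?J - 1 then mu ! (j + 1) - xs ! j else 0)" for xs and i j :: nat
  have ltl: "length (tl mu) = ?J - 1" by simp
  have ntl: "j < ?J - 1 \<Longrightarrow> tl mu ! j = mu ! (j + 1)" for j using ne by (simp add: nth_tl)
  have "bij_betw F (Xset mu k) (tables [k, n - mu ! 0 - k] (tl mu))"
    unfolding bij_betw_def
  proof (intro conjI)
    show "inj_on F (Xset mu k)"
    proof (rule inj_onI)
      fix xs ys assume xs: "xs \<in> Xset mu k" and ys: "ys \<in> Xset mu k" and e: "F xs = F ys"
      show "xs = ys"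
      proof (rule nth_equalityI)
        show "length xs = length ys" using xs ys by (simp add: Xset_def)
        fix j assume "j < length xs"
        hence "j < ?J - 1" using xs by (simp add: Xset_def)
        thus "xs ! j = ys ! j" using fun_cong[OF fun_cong[OF e, of 0], of j] by (simp add: F_def)
      qed
    qed
    show "F ` Xset mu k = tables [k, n - mu ! 0 - k] (tl mu)"
    proof
      show "F ` Xset mu k \<subseteq> tables [k, n - mu ! 0 - k] (tl mu)"
      proof
        fix M assume "M \<in> F ` Xset mu k"
        then obtain xs where xs: "xs \<in> Xset mu k" and M: "M = F xs" by blast
        have lx: "length xs = ?J - 1" and sx: "sum_list xs = k" and lex: "\<And>j. j < ?J - 1 \<Longrightarrow> xs!j \<le> mu!(j+1)"
          using xs unfolding Xset_def by auto
        have r0: "(\<Sum>j<?J - 1. xs ! j) = k" using sx lx by (simp add: sum_list_sum_nth atLeast0LessThan)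
        have r1: "(\<Sum>j<?J - 1. mu ! (j + 1) - xs ! j) = n - mu ! 0 - k"
          using sum_subtractf_nat[of "{..<?J - 1}" "\<lambda>j. xs ! j" "\<lambda>j. mu ! (j + 1)"] lex r0 stl by simp
        show "M \<in> tables [k, n - mu ! 0 - k] (tl mu)"
          unfolding tables_def M
        proof (intro CollectI conjI allI impI)
          fix i j assume "length [k, n - mu ! 0 - k] \<le> i \<or> length (tl mu) \<le> j"
          thus "F xs i j = 0" by (auto simp: F_def)
        next
          fix i assume "i < length [k, n - mu ! 0 - k]"
          hence "i = 0 \<or> i = 1" by auto
          thus "(\<Sum>j<length (tl mu). F xs i j) = [k, n - mu ! 0 - k] ! i"
            using r0 r1 by (auto simp: F_def)
        next
          fix j assume "j < length (tl mu)"
          hence j: "j < ?J - 1" by simp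
          thus "(\<Sum>i<length [k, n - mu ! 0 - k]. F xs i j) = tl mu ! j"
            using lex[OF j] ntl[OF j] by (simp add: F_def numeral_2_eq_2)
        qed
      qed
      show "tables [k, n - mu ! 0 - k] (tl mu) \<subseteq> F ` Xset mu k"
      proof
        fix M assume M: "M \<in> tables [k, n - mu ! 0 - k] (tl mu)"
        have z: "\<And>i j. (2 \<le> i \<or> ?J - 1 \<le> j) \<Longrightarrow> M i j = 0"
          and rs: "\<And>i. i < 2 \<Longrightarrow> (\<Sum>j<?J - 1. M i j) = [k, n - mu ! 0 - k] ! i"
          and cs: "\<And>j. j < ?J - 1 \<Longrightarrow> (\<Sum>i<2. M i j) = tl mu ! j"
          using M unfolding tables_def by (auto simp: numeral_2_eq_2)
        define xs where "xs = map (M 0) [0..<?J - 1]"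
        have cs': "M 0 j + M 1 j = mu ! (j + 1)" if "j < ?J - 1" for j
          using cs[OF that] ntl[OF that] by (simp add: numeral_2_eq_2)
        have "xs \<in> Xset mu k"
          unfolding Xset_def xs_def
        proof (simp only: mem_Collect_eq, intro conjI allI impI)
          show "length (map (M 0) [0..<?J - 1]) = ?J - 1" by simp
          show "sum_list (map (M 0) [0..<?J - 1]) = k"
            using rs[of 0] by (simp add: sum_list_sum_nth atLeast0LessThan)
          fix j assume "j < ?J - 1"
          thus "map (M 0) [0..<?J - 1] ! j \<le> mu ! (j + 1)" using cs'[of j] by simp
        qed
        moreover have "F xs = M"
        proof (rule ext, rule ext)
          fix i j
          show "F xs i j = M i j"
          proof (cases "j < ?J - 1")
            case True
            thus ?thesis using z[of i j] cs'[of j] unfolding F_def xs_def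
              by (cases "i = 0 \<or> i = 1") auto
          next
            case False thus ?thesis using z[of i j] unfolding F_def by simp
          qed
        qed
        ultimately show "M \<in> F ` Xset mu k" by blast
      qed
    qed
  qed
  thus ?thesis by (rule bij_betw_same_card)
qed

lemma ssyt_ge:
  assumes P: "is_partition n r" and T: "T \<in> ssyt r la"
  shows "(i, j) \<in> cells r \<Longrightarrow> Suc i \<le> T i j"
proof (induction i arbitrary: j)
  case 0
  thus ?case using T unfolding ssyt_def by auto
next
  case (Suc i)
  have srt: "sorted_wrt (\<ge>) r" using P unfolding is_partition_def by simp
  have lt: "Suc i < length r" "j < r ! Suc i" using Suc.prems unfolding cells_def by auto
  have "r ! Suc i \<le> r ! i" using sorted_wrt_nth_less[OF srt, of i "Suc i"] lt by simp
  hence c: "(i, j) \<in> cells r" using lt unfolding cells_def by auto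
  have "T i j < T (Suc i) j" using T Suc.prems unfolding ssyt_def by blast
  thus ?case using Suc.IH[OF c] by simp
qed

lemma part_b:
  assumes P: "is_partition n r" and PL: "is_partition n la" and n: "0 < n" and T: "T \<in> ssyt r la"
  shows "length r \<le> length la \<and> la ! 0 \<le> r ! 0"
proof
  have rne: "r \<noteq> []" and lne: "la \<noteq> []" using partition_facts(1) P PL n by auto
  let ?i = "length r - 1"
  have "0 < r ! ?i" using partition_facts(2)[OF P n, of ?i] rne by simp
  hence c: "(?i, 0) \<in> cells r" using rne unfolding cells_def by simp
  have "Suc ?i \<le> T ?i 0" using ssyt_ge[OF P T c] .
  moreover have "T ?i 0 \<le> length la" using T c unfolding ssyt_def by blast
  ultimately show "length r \<le> length la" using rne by simp
  have "1 \<in> {1..length la}" using lne by (cases la) auto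
  hence e: "card {(i, j)\<in>cells r. T i j = 1} = la ! 0" using T unfolding ssyt_def by auto
  have "{(i, j)\<in>cells r. T i j = 1} \<subseteq> Pair 0 ` {..<r ! 0}"
  proof
    fix x assume x: "x \<in> {(i, j)\<in>cells r. T i j = 1}"
    then obtain i j where x': "x = (i, j)" "(i, j) \<in> cells r" "T i j = 1" by auto
    have "Suc i \<le> T i j" using ssyt_ge[OF P T x'(2)] .
    hence "i = 0" using x' by simp
    thus "x \<in> Pair 0 ` {..<r ! 0}" using x' unfolding cells_def by auto
  qed
  hence "card {(i, j)\<in>cells r. T i j = 1} \<le> card (Pair (0::nat) ` {..<r ! 0})"
    by (intro card_mono) auto
  also have "\<dots> \<le> r ! 0" using card_image_le[of "{..<r ! 0}" "Pair (0::nat)"] by simp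
  finally show "la ! 0 \<le> r ! 0" using e by simp
qed

lemma Xset_one:
  assumes P: "is_partition n mu" and n: "0 < n"
  shows "card (Xset mu 1) = length mu - 1"
proof -
  let ?J = "length mu"
  define e where "e i = map (\<lambda>j. if j = i then 1 else (0::nat)) [0..<?J - 1]" for i
  have "Xset mu 1 = e ` {..<?J - 1}"
  proof
    show "Xset mu 1 \<subseteq> e ` {..<?J - 1}"
    proof
      fix xs assume X: "xs \<in> Xset mu 1"
      have lx: "length xs = ?J - 1" and sx: "sum_list xs = 1" using X unfolding Xset_def by auto
      have sx': "(\<Sum>j<?J - 1. xs ! j) = 1" using sx lx by (simp add: sum_list_sum_nth atLeast0LessThan)
      obtain i where i: "i < ?J - 1" "xs ! i \<noteq> 0"
      proof (rule ccontr)
        assume "\<not> thesis"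
        hence "\<forall>i < ?J - 1. xs ! i = 0" using that by blast
        hence "(\<Sum>j<?J - 1. xs ! j) = 0" by simp
        thus False using sx' by simp
      qed
      have "xs = e i"
      proof (rule nth_equalityI)
        show "length xs = length (e i)" using lx by (simp add: e_def)
        fix j assume "j < length xs"
        hence j: "j < ?J - 1" using lx by simp
        show "xs ! j = e i ! j"
        proof (cases "j = i")
          case True
          have "xs ! i \<le> (\<Sum>j<?J - 1. xs ! j)"
            using i(1) by (intro member_le_sum) auto
          thus ?thesis using True i j sx' by (simp add: e_def)
        next
          case False
          have "(\<Sum>j\<in>{i, j}. xs ! j) \<le> (\<Sum>j<?J - 1. xs ! j)"
            using i(1) j by (intro sum_mono2) auto
          hence "xs ! i + xs ! j \<le> 1" using False sx' by simp
          thus ?thesis using False i j by (simp add: e_def)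
        qed
      qed
      thus "xs \<in> e ` {..<?J - 1}" using i by blast
    qed
    show "e ` {..<?J - 1} \<subseteq> Xset mu 1"
    proof
      fix xs assume "xs \<in> e ` {..<?J - 1}"
      then obtain i where i: "i < ?J - 1" and xs: "xs = e i" by auto
      have "sum_list xs = (\<Sum>j<?J - 1. if j = i then 1 else 0)"
        unfolding xs e_def by (simp add: sum_list_sum_nth atLeast0LessThan)
      also have "\<dots> = 1" using i by simp
      finally have s: "sum_list xs = 1" .
      have "xs ! j \<le> mu ! (j + 1)" if "j < ?J - 1" for j
      proof -
        have "j + 1 < ?J" using that by simp
        hence "0 < mu ! (j + 1)" using partition_facts(2)[OF P n, of "j + 1"] by simp
        thus ?thesis using that unfolding xs e_def by auto
      qed
      thus "xs \<in> Xset mu 1" unfolding Xset_def using s by (simp add: xs e_def)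
    qed
  qed
  moreover have "inj_on e {..<?J - 1}"
  proof (rule inj_onI)
    fix i i' assume "i \<in> {..<?J - 1}" "i' \<in> {..<?J - 1}" "e i = e i'"
    hence "e i ! i = e i' ! i" by simp
    moreover have "i < ?J - 1" using \<open>i \<in> {..<?J - 1}\<close> by simp
    hence "e i ! i = 1" "e i' ! i = (if i = i' then 1 else 0)" by (simp_all add: e_def)
    ultimately show "i = i'" by (cases "i = i'") simp_all
  qed
  ultimately show ?thesis by (simp add: card_image)
qed


lemma beta_a:
  assumes "2 \<le> n" shows "beta n [n - 1, 1] = 1 - 2 / real n"
proof -
  have r: "real (n - Suc 0) = real n - 1" using assms by (simp add: of_nat_diff)
  have n0: "real n \<noteq> 0" using assms by simp
  have "beta n [n - 1, 1] = 1 / real n + 1 / (real n)^2 * ((real n - 1)^2 - (real n - 1) + (1 - 3))"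
    unfolding beta_def by (simp add: numeral_2_eq_2 r)
  also have "\<dots> = 1 - 2 / real n" using n0 by (simp add: field_simps power2_eq_square)
  finally show ?thesis .
qed

lemma Xset_c:
  "Xset [a, j] k = (if k \<le> j then {[k]} else {})"
  by (auto simp: Xset_def length_Suc_conv)

theorem corollary3p1:
  fixes n :: nat and \<rho> la \<mu> :: "nat list"
  assumes n_pos: "0 < n"
    and part_rho: "is_partition n \<rho>"
    and part_lam: "is_partition n la"
    and part_mu: "is_partition n \<mu>"
  shows
    "(2 \<le> n \<longrightarrow>
        kostka [n - 1, 1] la * kostka [n - 1, 1] \<mu> = (length la - 1) * (length \<mu> - 1)
      \<and> beta n [n - 1, 1] = 1 - 2 / real n)
   \<and> (kostka \<rho> la * kostka \<rho> \<mu> > 0 \<longrightarrow>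
        length \<rho> \<le> min (length la) (length \<mu>) \<and> \<rho> ! 0 \<ge> max (la ! 0) (\<mu> ! 0))
   \<and> (\<forall>k j. 1 \<le> k \<and> k \<le> n div 2 \<and> j \<le> n - j \<and> la = strip_zeros [n - j, j] \<longrightarrow>
        kostka [n - k, k] la = (if k > j then 0 else 1))
   \<and> (\<forall>k. k \<le> n - k \<and> k \<le> \<mu> ! 0 \<longrightarrow>
        kostka (strip_zeros [n - k, k]) \<mu>
          = card {xs :: nat list. length xs = length \<mu> - 1 \<and> sum_list xs = k
                    \<and> (\<forall>j < length \<mu> - 1. xs ! j \<le> \<mu> ! (j + 1))}
      \<and> card {xs :: nat list. length xs = length \<mu> - 1 \<and> sum_list xs = k
                    \<and> (\<forall>j < length \<mu> - 1. xs ! j \<le> \<mu> ! (j + 1))}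
          = card (tables [k, n - \<mu> ! 0 - k] (tl \<mu>)))"
proof (intro conjI impI allI)
  have one: "kostka [n - 1, 1] m = length m - 1" if P: "is_partition n m" and n2: "2 \<le> n" for m
  proof -
    have "m \<noteq> []" using partition_facts(1)[OF P n_pos] .
    hence "0 < m ! 0" using partition_facts(2)[OF P n_pos, of 0] by simp
    hence "kostka (strip_zeros [n - 1, 1]) m = card (Xset m 1)"
      using n2 by (intro kostka_two[OF P n_pos]) auto
    moreover have "strip_zeros [n - 1, 1] = [n - 1, 1]" using n2 by (simp add: strip_zeros_def)
    ultimately show ?thesis using Xset_one[OF P n_pos] by simp
  qed
  assume n2: "2 \<le> n"
  show "kostka [n - 1, 1] la * kostka [n - 1, 1] \<mu> = (length la - 1) * (length \<mu> - 1)"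
    using one[OF part_lam n2] one[OF part_mu n2] by simp
  show "beta n [n - 1, 1] = 1 - 2 / real n" using beta_a[OF n2] .
next
  assume pos: "kostka \<rho> la * kostka \<rho> \<mu> > 0"
  hence "kostka \<rho> la > 0" "kostka \<rho> \<mu> > 0" by auto
  hence "ssyt \<rho> la \<noteq> {}" "ssyt \<rho> \<mu> \<noteq> {}" unfolding kostka_def card_gt_0_iff by auto
  then obtain T T' where T: "T \<in> ssyt \<rho> la" and T': "T' \<in> ssyt \<rho> \<mu>" by blast
  have "length \<rho> \<le> length la \<and> la ! 0 \<le> \<rho> ! 0" by (rule part_b[OF part_rho part_lam n_pos T])
  moreover have "length \<rho> \<le> length \<mu> \<and> \<mu> ! 0 \<le> \<rho> ! 0" by (rule part_b[OF part_rho part_mu n_pos T'])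
  ultimately show "length \<rho> \<le> min (length la) (length \<mu>)" "\<rho> ! 0 \<ge> max (la ! 0) (\<mu> ! 0)" by auto
next
  fix k j
  assume h: "1 \<le> k \<and> k \<le> n div 2 \<and> j \<le> n - j \<and> la = strip_zeros [n - j, j]"
  have sk: "strip_zeros [n - k, k] = [n - k, k]" using h by (auto simp: strip_zeros_def)
  have kk: "k \<le> n - k" using h by auto
  show "kostka [n - k, k] la = (if k > j then 0 else 1)"
  proof (cases "j = 0")
    case True
    hence la: "la = [n]" using h n_pos by (simp add: strip_zeros_def)
    have kl: "k \<le> la ! 0" using la h by auto
    have "kostka (strip_zeros [n - k, k]) la = card (Xset la k)"
      by (rule kostka_two[OF part_lam n_pos kk kl])
    moreover have "Xset [n] k = {}" using h by (auto simp: Xset_def)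
    ultimately show ?thesis using sk True h la by simp
  next
    case False
    have "j < n" using False h by auto
    hence la: "la = [n - j, j]" using h False by (simp add: strip_zeros_def)
    have "2 * (n div 2) \<le> n" by simp
    hence "k \<le> n - j" using h by linarith
    hence kl: "k \<le> la ! 0" using la by simp
    have "kostka (strip_zeros [n - k, k]) la = card (Xset la k)"
      by (rule kostka_two[OF part_lam n_pos kk kl])
    thus ?thesis using sk la Xset_c[of "n - j" j k] by auto
  qed
next
  fix k assume h: "k \<le> n - k \<and> k \<le> \<mu> ! 0"
  have X: "{xs :: nat list. length xs = length \<mu> - 1 \<and> sum_list xs = k
                    \<and> (\<forall>j < length \<mu> - 1. xs ! j \<le> \<mu> ! (j + 1))} = Xset \<mu> k"
    unfolding Xset_def by simp
  show "kostka (strip_zeros [n - k, k]) \<mu>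
          = card {xs :: nat list. length xs = length \<mu> - 1 \<and> sum_list xs = k
                    \<and> (\<forall>j < length \<mu> - 1. xs ! j \<le> \<mu> ! (j + 1))}"
    unfolding X using h by (intro kostka_two[OF part_mu n_pos]) auto
  show "card {xs :: nat list. length xs = length \<mu> - 1 \<and> sum_list xs = k
                    \<and> (\<forall>j < length \<mu> - 1. xs ! j \<le> \<mu> ! (j + 1))}
          = card (tables [k, n - \<mu> ! 0 - k] (tl \<mu>))"
    unfolding X by (rule Xset_tables[OF part_mu n_pos])
qed

end
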